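(* Let $\mathbf{D},\mathbf{E},\mathbf{X}$ be Banach spaces such that $\mathbf{D}\subset\mathbf{X}$, $\mathbf{E}$ is an interpolation space between $\mathbf{D}$ and $\mathbf{X}$, and $\mathbf{D}$ is dense in $\mathbf{E}$. Let $(T_n)_{n\ge1}$ be bounded linear operators on $\mathbf{X}$ such that $\lim_n\|T_nx\|_{\mathbf{X}}=0$ for every $x\in\mathbf{X}$ and $\lim_n\|T_nx\|_{\mathbf{D}}=0$ for every $x\in\mathbf{D}$. Then $\lim_n\|T_nx\|_{\mathbf{E}}=0$ for every $x\in\mathbf{E}$.
   Context: $\mathbf{D}\subset\mathbf{X}$ means $\mathbf{D}$ is continuously embedded in $\mathbf{X}$: its elements form a subset of $\mathbf{X}$ and $\|x\|_{\mathbf{X}}\le N\|x\|_{\mathbf{D}}$ for some constant $N$. A Banach space $\mathbf{E}$ is an interpolation space between $\mathbf{D}$ and $\mathbf{X}$ if $\mathbf{D}\subset\mathbf{E}\subset\mathbf{X}$ and every bounded linear operator on $\mathbf{X}$ whose restriction to $\mathbf{D}$ is a bounded operator on $\mathbf{D}$ also restricts to a bounded operator on $\mathbf{E}$. *)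

theory Defs
  imports "HOL-Analysis.Analysis"
begin

text \<open>Continuous embeddings are modelled by injective bounded linear maps into the
ambient space X. D \<subset> E continuously: iD = iE \<circ> jDE with jDE bounded linear.\<close>

definition cont_embedding :: "('a::real_normed_vector \<Rightarrow> 'b::real_normed_vector) \<Rightarrow> bool" where
  "cont_embedding i \<longleftrightarrow> bounded_linear i \<and> inj i"

definition restricts_bounded :: "('a::real_normed_vector \<Rightarrow> 'x::real_normed_vector) \<Rightarrow> ('x \<Rightarrow> 'x) \<Rightarrow> bool" where
  "restricts_bounded i T \<longleftrightarrow> (\<exists>S. bounded_linear S \<and> (\<forall>a. i (S a) = T (i a)))"

definition interpolation_space ::
  "('d::real_normed_vector \<Rightarrow> 'x::real_normed_vector) \<Rightarrow> ('e::real_normed_vector \<Rightarrow> 'x) \<Rightarrow> bool" where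
  "interpolation_space iD iE \<longleftrightarrow>
     cont_embedding iD \<and> cont_embedding iE \<and>
     (\<exists>j. bounded_linear j \<and> (\<forall>d. iE (j d) = iD d)) \<and>
     (\<forall>T. bounded_linear T \<and> restricts_bounded iD T \<longrightarrow> restricts_bounded iE T)"

end

theory Submission
  imports Defs
begin

lemma cg_baire:
  fixes V :: "'v::banach set" and C :: "nat \<Rightarrow> 'v set"
  assumes "closed V" "V \<noteq> {}" and C: "\<And>k. closed (C k)" "\<And>k. C k \<subseteq> V" and cov: "V \<subseteq> (\<Union>k. C k)"
  shows "\<exists>k v0 r. r > 0 \<and> v0 \<in> V \<and> ball v0 r \<inter> V \<subseteq> C k"
proof (rule ccontr)
  assume nex: "\<not> ?thesis"
  have cm: "completely_metrizable_space (top_of_set V)"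
    by (simp add: assms(1) completely_metrizable_space_closedin completely_metrizable_space_euclidean)
  have "top_of_set V interior_of \<Union>(range C) = {}"
  proof (rule Baire_category_alt)
    show "completely_metrizable_space (top_of_set V) \<or> locally_compact_space (top_of_set V) \<and> regular_space (top_of_set V)"
      using cm by blast
    show "countable (range C)" by simp
    fix T assume "T \<in> range C"
    then obtain k where T: "T = C k" by blast
    have c1: "closedin (top_of_set V) T"
      using C T by (metis closedin_closed inf.absorb_iff2)
    have "top_of_set V interior_of T = {}"
    proof (rule ccontr)
      assume "top_of_set V interior_of T \<noteq> {}"
      then obtain x where x: "x \<in> top_of_set V interior_of T" by blast
      then obtain U where U: "openin (top_of_set V) U" "x \<in> U" "U \<subseteq> T"
        by (meson interior_of_subset openin_interior_of)
      then obtain S where S: "open S" "U = V \<inter> S" by (meson openin_open)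
      then obtain r where r: "r > 0" "ball x r \<subseteq> S" using U open_contains_ball by blast
      have "ball x r \<inter> V \<subseteq> C k" using r S U T by blast
      moreover have "x \<in> V" using S U by blast
      ultimately show False using nex r by blast
    qed
    then show "closedin (top_of_set V) T \<and> top_of_set V interior_of T = {}" using c1 by blast
  qed
  moreover have "\<Union>(range C) = V" using C cov by blast
  moreover have "top_of_set V interior_of V = V"
    by (metis interior_of_topspace topspace_euclidean_subtopology)
  ultimately show False using assms(2) by simp
qed

lemma closed_graph:
  fixes \<Phi> :: "'v::banach \<Rightarrow> 'w::banach"
  assumes sub: "subspace V" and cl: "closed V"
   and add: "\<And>a b. a\<in>V \<Longrightarrow> b\<in>V \<Longrightarrow> \<Phi>(a+b) = \<Phi> a + \<Phi> b"
   and scale: "\<And>c a. a\<in>V \<Longrightarrow> \<Phi>(c *\<^sub>R a) = c *\<^sub>R \<Phi> a"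
   and cg: "\<And>v x w. (\<And>k. v k \<in> V) \<Longrightarrow> v \<longlonglongrightarrow> x \<Longrightarrow> (\<lambda>k. \<Phi> (v k)) \<longlonglongrightarrow> w \<Longrightarrow> \<Phi> x = w"
  shows "\<exists>M. \<forall>v\<in>V. norm (\<Phi> v) \<le> M * norm v"
proof -
  have V0: "0 \<in> V" using sub subspace_0 by blast
  have Vadd: "a + b \<in> V" if "a \<in> V" "b \<in> V" for a b using sub that subspace_add by blast
  have Vdiff: "a - b \<in> V" if "a \<in> V" "b \<in> V" for a b using sub that subspace_diff by blast
  have Vscale: "c *\<^sub>R a \<in> V" if "a \<in> V" for a c using sub that subspace_scale by blast
  have Phi0: "\<Phi> 0 = 0" using scale[of 0 0] V0 by simp
  have Phidiff: "\<Phi> (a - b) = \<Phi> a - \<Phi> b" if "a \<in> V" "b \<in> V" for a b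
  proof -
    have e1: "\<Phi> (a + (-1) *\<^sub>R b) = \<Phi> a + \<Phi> ((-1) *\<^sub>R b)" by (rule add[OF that(1) Vscale[OF that(2)]])
    have e2: "\<Phi> ((-1) *\<^sub>R b) = (-1) *\<^sub>R \<Phi> b" by (rule scale) (use that in auto)
    have e3: "a - b = a + (-1) *\<^sub>R b" by simp
    show ?thesis unfolding e3 e1 e2 by simp
  qed
  define C where "C k = closure {v\<in>V. norm (\<Phi> v) \<le> real k}" for k
  have Csub: "C k \<subseteq> V" for k unfolding C_def using cl by (simp add: closure_minimal)
  have Ccl: "closed (C k)" for k unfolding C_def by simp
  have cov: "V \<subseteq> (\<Union>k. C k)"
  proof
    fix v assume v: "v \<in> V"
    obtain k :: nat where k: "norm (\<Phi> v) \<le> real k" using real_arch_simple[of "norm (\<Phi> v)"] by blast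
    have "v \<in> {v\<in>V. norm (\<Phi> v) \<le> real k}" using v k by simp
    then have "v \<in> C k" unfolding C_def by (meson closure_subset subsetD)
    then show "v \<in> (\<Union>k. C k)" by blast
  qed
  have "\<exists>k v0 r. r > 0 \<and> v0 \<in> V \<and> ball v0 r \<inter> V \<subseteq> C k"
    by (rule cg_baire[OF cl _ Ccl Csub cov]) (use V0 in auto)
  then obtain k v0 r where r: "r > 0" "v0 \<in> V" "ball v0 r \<inter> V \<subseteq> C k"
    by blast
  have approx: "\<exists>s\<in>V. norm (\<Phi> s) \<le> real k \<and> norm (s - u) < \<epsilon>"
    if u: "u \<in> V" "norm u < r" and e: "\<epsilon> > 0" for u \<epsilon>
  proof -
    have "v0 + u \<in> C k" using r u Vadd by (auto simp: dist_norm)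
    then obtain a where a: "a \<in> V" "norm (\<Phi> a) \<le> real k" "dist a (v0 + u) < \<epsilon>"
      using e unfolding C_def closure_approachable by blast
    have "v0 - u \<in> C k" using r u Vdiff by (auto simp: dist_norm)
    then obtain b where b: "b \<in> V" "norm (\<Phi> b) \<le> real k" "dist b (v0 - u) < \<epsilon>"
      using e unfolding C_def closure_approachable by blast
    define s where "s = (1/2) *\<^sub>R (a - b)"
    have sV: "s \<in> V" unfolding s_def using a b Vdiff Vscale by blast
    have "\<Phi> s = (1/2) *\<^sub>R (\<Phi> a - \<Phi> b)" unfolding s_def using scale Phidiff a b Vdiff by simp
    then have "norm (\<Phi> s) = (1/2) * norm (\<Phi> a - \<Phi> b)" by simp
    also have "\<dots> \<le> (1/2) * (norm (\<Phi> a) + norm (\<Phi> b))" by (simp add: norm_triangle_ineq4)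
    also have "\<dots> \<le> real k" using a b by simp
    finally have n1: "norm (\<Phi> s) \<le> real k" .
    have "s - u = (1/2) *\<^sub>R ((a - (v0 + u)) - (b - (v0 - u)))" unfolding s_def by (simp add: algebra_simps flip: scaleR_add_left)
    then have "norm (s - u) = (1/2) * norm ((a - (v0 + u)) - (b - (v0 - u)))" by simp
    also have "\<dots> \<le> (1/2) * (norm (a - (v0 + u)) + norm (b - (v0 - u)))" by (intro mult_left_mono norm_triangle_ineq4) simp
    also have "\<dots> < \<epsilon>" using a b by (simp add: dist_norm)
    finally show ?thesis using sV n1 by blast
  qed
  define M where "M = 2 * real k / r"
  have M0: "M \<ge> 0" unfolding M_def using r by simp
  have approx2: "\<exists>s. s \<in> V \<and> norm (\<Phi> s) \<le> M * norm u \<and> norm (s - u) < \<epsilon>"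
    if u: "u \<in> V" and e: "\<epsilon> > 0" for u \<epsilon>
  proof (cases "u = 0")
    case True then show ?thesis using V0 Phi0 e by (intro exI[of _ 0]) simp
  next
    case False
    define l where "l = r / (2 * norm u)"
    have l: "l > 0" using False r unfolding l_def by simp
    have "norm (l *\<^sub>R u) = r/2" using False l r unfolding l_def by simp
    then obtain s' where s': "s' \<in> V" "norm (\<Phi> s') \<le> real k" "norm (s' - l *\<^sub>R u) < l * \<epsilon>"
      using approx[of "l *\<^sub>R u" "l * \<epsilon>"] u Vscale r l e by auto
    define s where "s = (1/l) *\<^sub>R s'"
    have "s \<in> V" unfolding s_def using s' Vscale by blast
    moreover have "norm (\<Phi> s) = norm (\<Phi> s') / l" unfolding s_def using scale s' l by simp
    moreover have "norm (\<Phi> s') / l \<le> real k / l" using s' l by (simp add: divide_right_mono)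
    moreover have "real k / l = M * norm u" unfolding M_def l_def using False r by (simp add: field_simps)
    moreover have "s - u = (1/l) *\<^sub>R (s' - l *\<^sub>R u)" unfolding s_def using l by (simp add: algebra_simps)
    moreover have "norm ((1/l) *\<^sub>R (s' - l *\<^sub>R u)) = norm (s' - l *\<^sub>R u) / l" using l by simp
    moreover have "norm (s' - l *\<^sub>R u) / l < \<epsilon>" using s' l by (simp add: field_simps)
    ultimately show ?thesis by auto
  qed
  define f where "f u \<epsilon> = (SOME s. s \<in> V \<and> norm (\<Phi> s) \<le> M * norm u \<and> norm (s - u) < \<epsilon>)" for u \<epsilon>
  have f: "f u \<epsilon> \<in> V \<and> norm (\<Phi> (f u \<epsilon>)) \<le> M * norm u \<and> norm (f u \<epsilon> - u) < \<epsilon>"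
    if "u \<in> V" "\<epsilon> > 0" for u \<epsilon>
    unfolding f_def by (rule someI_ex) (rule approx2[OF that])
  have main: "norm (\<Phi> v) \<le> M * norm v + 4 * M * \<delta>" if v: "v \<in> V" and d: "\<delta> > 0" for v \<delta>
  proof -
    define u where "u = rec_nat v (\<lambda>j x. x - f x (\<delta> / 2^j))"
    have u0: "u 0 = v" unfolding u_def by simp
    have uS: "u (Suc j) = u j - f (u j) (\<delta> / 2^j)" for j unfolding u_def by simp
    have uV: "u j \<in> V" for j
      by (induction j) (use v f d Vdiff in \<open>auto simp: u0 uS\<close>)
    define s where "s j = f (u j) (\<delta> / 2^j)" for j
    have sV: "s j \<in> V" for j unfolding s_def using f uV d by simp
    have sPhi: "norm (\<Phi> (s j)) \<le> M * norm (u j)" for j unfolding s_def using f uV d by simp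
    have uSs: "u (Suc j) = u j - s j" for j unfolding s_def uS ..
    have uSn: "norm (u (Suc j)) < \<delta> / 2^j" for j
      using f[OF uV[of j], of "\<delta>/2^j"] d unfolding uSs s_def by (simp add: norm_minus_commute)
    define b where "b j = M * norm v * (if j = 0 then 1 else 0) + M * (2 * \<delta>) * (1/2)^j" for j :: nat
    have gb: "norm (norm (\<Phi> (s j))) \<le> b j" for j
    proof (cases j)
      case 0 then show ?thesis using sPhi[of 0] u0 M0 d unfolding b_def by (simp add: add_increasing2)
    next
      case (Suc i)
      have "norm (\<Phi> (s j)) \<le> M * norm (u j)" by (rule sPhi)
      also have "\<dots> \<le> M * (\<delta> / 2^i)" using uSn[of i] Suc M0 by (intro mult_left_mono) auto
      also have "\<dots> = M * (2 * \<delta>) * (1/2)^j" using Suc by (simp add: field_simps)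
      finally show ?thesis unfolding b_def using Suc by simp
    qed
    have sb1: "summable (\<lambda>j::nat. M * norm v * (if j = 0 then 1 else 0))"
      by (rule summable_mult) (simp add: summable_finite[of "{0}"])
    have sb2: "summable (\<lambda>j::nat. M * (2 * \<delta>) * (1/2)^j)"
      by (rule summable_mult) (simp add: summable_geometric)
    have sb: "summable b" unfolding b_def using sb1 sb2 by (rule summable_add)
    have sumb: "suminf b = M * norm v + M * (2 * \<delta>) * 2"
    proof -
      have "suminf b = (\<Sum>j. M * norm v * (if j = 0 then 1 else 0)) + (\<Sum>j. M * (2 * \<delta>) * (1/2)^j)"
        unfolding b_def using sb1 sb2 by (rule suminf_add[symmetric])
      moreover have "(\<Sum>j::nat. M * norm v * (if j = 0 then 1 else 0)) = M * norm v"
        by (subst suminf_finite[of "{0}"]) auto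
      moreover have "(\<Sum>j. M * (2 * \<delta>) * (1/2::real)^j) = M * (2 * \<delta>) * 2"
        by (subst suminf_mult) (auto simp: suminf_geometric summable_geometric)
      ultimately show ?thesis by simp
    qed
    have sn: "summable (\<lambda>j. norm (\<Phi> (s j)))"
      by (rule summable_comparison_test[OF _ sb]) (use gb in auto)
    have sp: "summable (\<lambda>j. \<Phi> (s j))" using sn by (rule summable_norm_cancel)
    have wle: "norm (\<Sum>j. \<Phi> (s j)) \<le> M * norm v + 4 * M * \<delta>"
    proof -
      have "norm (\<Sum>j. \<Phi> (s j)) \<le> (\<Sum>j. norm (\<Phi> (s j)))" using sn by (rule summable_norm)
      also have "\<dots> \<le> suminf b" using sn sb gb by (intro suminf_le) auto
      finally show ?thesis using sumb by simp
    qed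
    have psV: "(\<Sum>j<n. s j) \<in> V" for n
      by (induction n) (auto simp: V0 Vadd sV)
    have psPhi: "\<Phi> (\<Sum>j<n. s j) = (\<Sum>j<n. \<Phi> (s j))" for n
      by (induction n) (auto simp: Phi0 add psV sV)
    have pseq: "(\<Sum>j<n. s j) = v - u n" for n
      by (induction n) (auto simp: u0 uSs)
    have "(\<lambda>n. u (Suc n)) \<longlonglongrightarrow> 0"
    proof (rule Lim_null_comparison)
      show "\<forall>\<^sub>F n in sequentially. norm (u (Suc n)) \<le> \<delta> * (1/2)^n"
      proof (rule always_eventually, rule allI)
        fix n
        have "norm (u (Suc n)) < \<delta> / 2^n" by (rule uSn)
        also have "\<delta> / 2^n = \<delta> * (1/2)^n" by (simp add: power_one_over)
        finally show "norm (u (Suc n)) \<le> \<delta> * (1/2)^n" by simp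
      qed
      show "(\<lambda>n. \<delta> * (1/2::real)^n) \<longlonglongrightarrow> 0"
        by (rule tendsto_mult_right_zero) (simp add: LIMSEQ_realpow_zero)
    qed
    then have "u \<longlonglongrightarrow> 0" by (rule LIMSEQ_imp_Suc)
    then have "(\<lambda>n. v - u n) \<longlonglongrightarrow> v - 0" by (intro tendsto_intros)
    then have conv: "(\<lambda>n. \<Sum>j<n. s j) \<longlonglongrightarrow> v" by (simp add: pseq)
    have "(\<lambda>n. \<Phi> (\<Sum>j<n. s j)) \<longlonglongrightarrow> (\<Sum>j. \<Phi> (s j))"
      unfolding psPhi using sp by (rule summable_LIMSEQ)
    then have "\<Phi> v = (\<Sum>j. \<Phi> (s j))" using cg[OF psV conv] by blast
    then show ?thesis using wle by simp
  qed
  have "norm (\<Phi> v) \<le> M * norm v" if v: "v \<in> V" for v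
  proof (rule field_le_epsilon)
    fix e :: real assume e: "e > 0"
    define \<delta> where "\<delta> = e / (4 * M + 1)"
    have d: "\<delta> > 0" unfolding \<delta>_def using e M0 by simp
    have "4 * M * \<delta> \<le> e" unfolding \<delta>_def using e M0 by (simp add: field_simps)
    then show "norm (\<Phi> v) \<le> M * norm v + e" using main[OF v d] by simp
  qed
  then show ?thesis by blast
qed


lemma norm_pair_le_add: "norm (a, b) \<le> norm a + norm b"
proof -
  have "norm (a, b) = sqrt ((norm a)\<^sup>2 + (norm b)\<^sup>2)" by (rule norm_Pair)
  also have "\<dots> \<le> sqrt ((norm a)\<^sup>2) + sqrt ((norm b)\<^sup>2)" by (rule sqrt_add_le_add_sqrt) auto
  finally show ?thesis by simp
qed

lemma unif_bdd:
  fixes L :: "nat \<Rightarrow> 'a::banach \<Rightarrow> 'b::real_normed_vector"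
  assumes bl: "\<And>n. bounded_linear (L n)" and pb: "\<And>x. \<exists>B. \<forall>n. norm (L n x) \<le> B"
  shows "\<exists>C\<ge>0. \<forall>n x. norm (L n x) \<le> C * norm x"
proof -
  define F where "F k = {x. \<forall>n. norm (L n x) \<le> real k}" for k :: nat
  have Fcl: "closed (F k)" for k
  proof -
    have "F k = (\<Inter>n. {x. norm (L n x) \<le> real k})" unfolding F_def by blast
    moreover have "closed {x. norm (L n x) \<le> real k}" for n
      by (intro closed_Collect_le continuous_intros continuous_on_norm
          linear_continuous_on bl)
    ultimately show ?thesis by auto
  qed
  have cov: "(UNIV::'a set) \<subseteq> (\<Union>k. F k)"
  proof
    fix x :: 'a
    obtain B where B: "\<forall>n. norm (L n x) \<le> B" using pb by blast
    obtain k :: nat where k: "B \<le> real k" using real_arch_simple[of B] by blast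
    have "x \<in> F k" unfolding F_def using B k by (auto intro: order.trans)
    then show "x \<in> (\<Union>k. F k)" by blast
  qed
  have "\<exists>k v0 r. r > 0 \<and> v0 \<in> UNIV \<and> ball v0 r \<inter> UNIV \<subseteq> F k"
    by (rule cg_baire[OF closed_UNIV _ Fcl _ cov]) auto
  then obtain k x0 r where r: "r > 0" "ball x0 r \<subseteq> F k" by auto
  have small: "norm (L n y) \<le> 2 * real k" if "norm y < r" for n y
  proof -
    have "x0 + y \<in> F k" "x0 \<in> F k" using r that by (auto simp: dist_norm)
    then have a: "norm (L n (x0 + y)) \<le> real k" "norm (L n x0) \<le> real k" unfolding F_def by auto
    have "L n y = L n (x0 + y) - L n x0" using linear_add[OF bounded_linear.linear[OF bl[of n]]] by simp
    then have "norm (L n y) \<le> norm (L n (x0 + y)) + norm (L n x0)" by (simp add: norm_triangle_ineq4)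
    then show ?thesis using a by simp
  qed
  define C where "C = 4 * real k / r"
  have "norm (L n y) \<le> C * norm y" for n y
  proof (cases "y = 0")
    case True then show ?thesis using linear_0[OF bounded_linear.linear[OF bl[of n]]] by simp
  next
    case False
    define l where "l = r / (2 * norm y)"
    have l: "l > 0" using False r unfolding l_def by simp
    have "norm (l *\<^sub>R y) = r / 2" using False r l unfolding l_def by simp
    then have "norm (L n (l *\<^sub>R y)) \<le> 2 * real k" using r by (intro small) simp
    moreover have "L n (l *\<^sub>R y) = l *\<^sub>R L n y" using linear_scale[OF bounded_linear.linear[OF bl[of n]]] by simp
    ultimately have "l * norm (L n y) \<le> 2 * real k" using l by simp
    then have "norm (L n y) \<le> 2 * real k / l" using l by (simp add: field_simps)
    also have "2 * real k / l = C * norm y" unfolding C_def l_def using False r by (simp add: field_simps)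
    finally show ?thesis .
  qed
  moreover have "C \<ge> 0" unfolding C_def using r by simp
  ultimately show ?thesis by blast
qed


lemma induced:
  fixes i :: "'d::banach \<Rightarrow> 'x::banach" and T :: "'x \<Rightarrow> 'x"
  assumes bli: "bounded_linear i" and inj: "inj i" and blT: "bounded_linear T"
    and ex: "\<And>d. \<exists>y. i y = T (i d)"
  shows "bounded_linear (\<lambda>d. THE y. i y = T (i d))" and "\<And>d. i (THE y. i y = T (i d)) = T (i d)"
proof -
  define A where "A d = (THE y. i y = T (i d))" for d
  have Ai: "i (A d) = T (i d)" for d
  proof -
    have "\<exists>!y. i y = T (i d)" using ex[of d] by (auto intro: injD[OF inj])
    then show ?thesis unfolding A_def by (rule theI')
  qed
  then show "\<And>d. i (THE y. i y = T (i d)) = T (i d)" unfolding A_def .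
  have li: "linear i" and lT: "linear T" using bli blT bounded_linear.linear by auto
  have Aadd: "A (a + b) = A a + A b" for a b
  proof (rule injD[OF inj])
    show "i (A (a + b)) = i (A a + A b)"
      using Ai linear_add[OF li] linear_add[OF lT] by simp
  qed
  have Ascale: "A (c *\<^sub>R a) = c *\<^sub>R A a" for c a
  proof (rule injD[OF inj])
    show "i (A (c *\<^sub>R a)) = i (c *\<^sub>R A a)"
      using Ai linear_scale[OF li] linear_scale[OF lT] by simp
  qed
  have "\<exists>M. \<forall>v\<in>UNIV. norm (A v) \<le> M * norm v"
  proof (rule closed_graph[OF subspace_UNIV closed_UNIV])
    show "A (a + b) = A a + A b" for a b by (rule Aadd)
    show "A (c *\<^sub>R a) = c *\<^sub>R A a" for c a by (rule Ascale)
    fix v x w assume v: "v \<longlonglongrightarrow> x" and w: "(\<lambda>k. A (v k)) \<longlonglongrightarrow> w"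
    have "(\<lambda>k. i (A (v k))) \<longlonglongrightarrow> i w" using bounded_linear.tendsto[OF bli w] .
    moreover have "(\<lambda>k. i (A (v k))) \<longlonglongrightarrow> T (i x)"
      unfolding Ai using bounded_linear.tendsto[OF blT bounded_linear.tendsto[OF bli v]] .
    ultimately have "i w = T (i x)" using LIMSEQ_unique by blast
    then show "A x = w" using Ai injD[OF inj] by metis
  qed
  then obtain M where M: "\<And>v. norm (A v) \<le> M * norm v" by blast
  have "bounded_linear A"
    by (rule bounded_linear_intro[where K=M]) (auto simp: Aadd Ascale M mult.commute)
  then show "bounded_linear (\<lambda>d. THE y. i y = T (i d))" unfolding A_def .
qed

theorem lemma1:
  fixes iD :: "'d::banach \<Rightarrow> 'x::banach" and iE :: "'e::banach \<Rightarrow> 'x"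
    and jDE :: "'d \<Rightarrow> 'e" and T :: "nat \<Rightarrow> 'x \<Rightarrow> 'x"
  assumes interp: "interpolation_space iD iE"
    and jDE: "bounded_linear jDE" "\<And>d. iE (jDE d) = iD d"
    and dense: "closure (range jDE) = UNIV"
    and T_bl: "\<And>n. bounded_linear (T n)"
    and T_X: "\<And>x. (\<lambda>n. norm (T n x)) \<longlonglongrightarrow> 0"
    and T_D: "\<And>d. \<exists>s :: nat \<Rightarrow> 'd. (\<forall>n. iD (s n) = T n (iD d)) \<and> (\<lambda>n. norm (s n)) \<longlonglongrightarrow> 0"
  shows "\<And>e. \<exists>r :: nat \<Rightarrow> 'e. (\<forall>n. iE (r n) = T n (iE e)) \<and> (\<lambda>n. norm (r n)) \<longlonglongrightarrow> 0"
proof -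
  have blD: "bounded_linear iD" and injD': "inj iD" and blE: "bounded_linear iE" and injE: "inj iE"
    and intp: "\<And>T. bounded_linear T \<Longrightarrow> restricts_bounded iD T \<Longrightarrow> restricts_bounded iE T"
    using interp unfolding interpolation_space_def cont_embedding_def by auto
  have lD: "linear iD" and lE: "linear iE" using blD blE bounded_linear.linear by auto
  have lT: "linear (T n)" for n using T_bl bounded_linear.linear by auto
  define A where "A n d = (THE y. iD y = T n (iD d))" for n d
  have exD: "\<exists>y. iD y = T n (iD d)" for n d using T_D[of d] by blast
  have blA: "bounded_linear (A n)" for n
    unfolding A_def using induced(1)[OF blD injD' T_bl exD] .
  have Ai: "iD (A n d) = T n (iD d)" for n d
    unfolding A_def using induced(2)[OF blD injD' T_bl exD] .
  have A_lim: "(\<lambda>n. norm (A n d)) \<longlonglongrightarrow> 0" for d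
  proof -
    obtain s where s: "\<forall>n. iD (s n) = T n (iD d)" "(\<lambda>n. norm (s n)) \<longlonglongrightarrow> 0" using T_D[of d] by blast
    have "A n d = s n" for n using s(1) Ai injD'[unfolded inj_def] by metis
    then show ?thesis using s(2) by simp
  qed
  have pbX: "\<exists>B. \<forall>n. norm (T n x) \<le> B" for x
  proof -
    have "Bseq (\<lambda>n. norm (T n x))" using T_X[of x] by (rule convergent_imp_Bseq[OF convergentI])
    then show ?thesis unfolding Bseq_def by auto
  qed
  have pbD: "\<exists>B. \<forall>n. norm (A n d) \<le> B" for d
  proof -
    have "Bseq (\<lambda>n. norm (A n d))" using A_lim[of d] by (rule convergent_imp_Bseq[OF convergentI])
    then show ?thesis unfolding Bseq_def by auto
  qed
  obtain CX where CX: "CX \<ge> 0" "\<And>n x. norm (T n x) \<le> CX * norm x" using unif_bdd[OF T_bl pbX] by blast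
  obtain CD where CD: "CD \<ge> 0" "\<And>n d. norm (A n d) \<le> CD * norm d" using unif_bdd[OF blA pbD] by blast
  define V where "V = {p :: ('x \<Rightarrow>\<^sub>L 'x) \<times> ('d \<Rightarrow>\<^sub>L 'd). \<forall>d. iD (blinfun_apply (snd p) d) = blinfun_apply (fst p) (iD d)}"
  have exB: "\<exists>B. \<forall>e. iE (blinfun_apply B e) = blinfun_apply (fst p) (iE e)" if "p \<in> V" for p
  proof -
    have "restricts_bounded iD (blinfun_apply (fst p))"
      unfolding restricts_bounded_def using that unfolding V_def
      by (intro exI[of _ "blinfun_apply (snd p)"]) (auto intro: blinfun.bounded_linear_right)
    then have "restricts_bounded iE (blinfun_apply (fst p))"
      by (intro intp blinfun.bounded_linear_right)
    then obtain S where S: "bounded_linear S" "\<forall>a. iE (S a) = blinfun_apply (fst p) (iE a)"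
      unfolding restricts_bounded_def by blast
    then show ?thesis by (intro exI[of _ "Blinfun S"]) (simp add: bounded_linear_Blinfun_apply)
  qed
  have uniqB: "B1 = B2" if "\<forall>e. iE (blinfun_apply B1 e) = f e" "\<forall>e. iE (blinfun_apply B2 e) = f e" for B1 B2 :: "'e \<Rightarrow>\<^sub>L 'e" and f
    using that injE by (intro blinfun_eqI) (metis injD)
  define Phi where "Phi p = (THE B. \<forall>e. iE (blinfun_apply B e) = blinfun_apply (fst p) (iE e))" for p :: "('x \<Rightarrow>\<^sub>L 'x) \<times> ('d \<Rightarrow>\<^sub>L 'd)"
  have PhiP: "iE (blinfun_apply (Phi p) e) = blinfun_apply (fst p) (iE e)" if pV: "p \<in> V" for p e
  proof -
    obtain B0 where B0: "\<forall>e. iE (blinfun_apply B0 e) = blinfun_apply (fst p) (iE e)"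
      using exB[OF pV] by blast
    have "\<exists>!B. \<forall>e. iE (blinfun_apply B e) = blinfun_apply (fst p) (iE e)"
    proof (rule ex1I[of _ B0])
      show "\<forall>e. iE (blinfun_apply B0 e) = blinfun_apply (fst p) (iE e)" by (rule B0)
      fix B assume "\<forall>e. iE (blinfun_apply B e) = blinfun_apply (fst p) (iE e)"
      then show "B = B0" using uniqB[of B "\<lambda>e. blinfun_apply (fst p) (iE e)" B0] B0 by simp
    qed
    then have "\<forall>e. iE (blinfun_apply (Phi p) e) = blinfun_apply (fst p) (iE e)" unfolding Phi_def by (rule theI')
    then show ?thesis by blast
  qed
  have Phi_uniq: "Phi p = B" if "p \<in> V" "\<And>e. iE (blinfun_apply B e) = blinfun_apply (fst p) (iE e)" for p B
    using PhiP[OF that(1)] that(2) uniqB[of "Phi p" "\<lambda>e. blinfun_apply (fst p) (iE e)" B] by simp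
  have subV: "subspace V"
    unfolding subspace_def V_def
    by (auto simp: blinfun.bilinear_simps linear_add[OF lD] linear_scale[OF lD] linear_0[OF lD])
  have clV: "closed V"
    unfolding closed_sequential_limits
  proof (intro allI impI, elim conjE)
    fix v :: "nat \<Rightarrow> ('x \<Rightarrow>\<^sub>L 'x) \<times> ('d \<Rightarrow>\<^sub>L 'd)" and p
    assume vV: "\<forall>k. v k \<in> V" and vp: "v \<longlonglongrightarrow> p"
    show "p \<in> V" unfolding V_def
    proof (intro CollectI allI)
      fix d
      have "(\<lambda>k. iD (blinfun_apply (snd (v k)) d)) \<longlonglongrightarrow> iD (blinfun_apply (snd p) d)"
        by (intro bounded_linear.tendsto[OF blD] tendsto_intros vp)
      moreover have "(\<lambda>k. iD (blinfun_apply (snd (v k)) d)) = (\<lambda>k. blinfun_apply (fst (v k)) (iD d))"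
        using vV unfolding V_def by auto
      moreover have "(\<lambda>k. blinfun_apply (fst (v k)) (iD d)) \<longlonglongrightarrow> blinfun_apply (fst p) (iD d)"
        by (intro tendsto_intros vp)
      ultimately show "iD (blinfun_apply (snd p) d) = blinfun_apply (fst p) (iD d)"
        using LIMSEQ_unique by metis
    qed
  qed
  have "\<exists>M. \<forall>v\<in>V. norm (Phi v) \<le> M * norm v"
  proof (rule closed_graph[OF subV clV])
    fix a b assume ab: "a \<in> V" "b \<in> V"
    then have "a + b \<in> V" using subV subspace_add by blast
    then show "Phi (a + b) = Phi a + Phi b"
      by (rule Phi_uniq) (simp add: blinfun.bilinear_simps linear_add[OF lE] PhiP ab)
  next
    fix c a assume a: "a \<in> V"
    then have "c *\<^sub>R a \<in> V" using subV subspace_scale by blast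
    then show "Phi (c *\<^sub>R a) = c *\<^sub>R Phi a"
      by (rule Phi_uniq) (simp add: blinfun.bilinear_simps linear_scale[OF lE] PhiP a)
  next
    fix v x w assume vV: "\<And>k. v k \<in> V" and vx: "v \<longlonglongrightarrow> x" and w: "(\<lambda>k. Phi (v k)) \<longlonglongrightarrow> w"
    have xV: "x \<in> V" using clV vV vx closed_sequentially by blast
    show "Phi x = w"
    proof (rule Phi_uniq[OF xV])
      fix e
      have "(\<lambda>k. iE (blinfun_apply (Phi (v k)) e)) \<longlonglongrightarrow> iE (blinfun_apply w e)"
        by (intro bounded_linear.tendsto[OF blE] tendsto_intros w)
      moreover have "(\<lambda>k. iE (blinfun_apply (Phi (v k)) e)) = (\<lambda>k. blinfun_apply (fst (v k)) (iE e))"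
        using PhiP vV by auto
      moreover have "(\<lambda>k. blinfun_apply (fst (v k)) (iE e)) \<longlonglongrightarrow> blinfun_apply (fst x) (iE e)"
        by (intro tendsto_intros vx)
      ultimately show "iE (blinfun_apply w e) = blinfun_apply (fst x) (iE e)"
        using LIMSEQ_unique by metis
    qed
  qed
  then obtain M where M: "\<And>v. v \<in> V \<Longrightarrow> norm (Phi v) \<le> M * norm v" by blast
  define p where "p n = (Blinfun (T n), Blinfun (A n))" for n
  have pV: "p n \<in> V" for n
    unfolding p_def V_def using T_bl blA Ai by (simp add: bounded_linear_Blinfun_apply)
  define B where "B n = Phi (p n)" for n
  have Bi: "iE (blinfun_apply (B n) e) = T n (iE e)" for n e
    unfolding B_def using PhiP[OF pV] T_bl unfolding p_def by (simp add: bounded_linear_Blinfun_apply)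
  define K where "K = max M 0 * (CX + CD)"
  have K0: "K \<ge> 0" unfolding K_def using CX CD by simp
  have BK: "norm (B n) \<le> K" for n
  proof -
    have "norm (Blinfun (T n)) \<le> CX"
      by (rule norm_blinfun_bound) (use CX T_bl in \<open>auto simp: bounded_linear_Blinfun_apply\<close>)
    moreover have "norm (Blinfun (A n)) \<le> CD"
      by (rule norm_blinfun_bound) (use CD blA in \<open>auto simp: bounded_linear_Blinfun_apply\<close>)
    ultimately have np: "norm (p n) \<le> CX + CD" unfolding p_def using norm_pair_le_add
      by (metis add_mono order.trans)
    have "norm (B n) \<le> M * norm (p n)" unfolding B_def by (rule M[OF pV])
    also have "\<dots> \<le> max M 0 * norm (p n)" by (intro mult_right_mono) auto
    also have "\<dots> \<le> max M 0 * (CX + CD)" using np by (intro mult_left_mono) auto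
    finally show ?thesis unfolding K_def .
  qed
  have BjDE: "blinfun_apply (B n) (jDE d) = jDE (A n d)" for n d
    using Bi[of n "jDE d"] jDE(2) Ai injE by (metis injD)
  obtain Kj where Kj: "Kj > 0" "\<And>x. norm (jDE x) \<le> norm x * Kj"
    using bounded_linear.pos_bounded[OF jDE(1)] by blast
  fix e
  show "\<exists>r :: nat \<Rightarrow> 'e. (\<forall>n. iE (r n) = T n (iE e)) \<and> (\<lambda>n. norm (r n)) \<longlonglongrightarrow> 0"
  proof (intro exI conjI allI)
    show "iE (blinfun_apply (B n) e) = T n (iE e)" for n by (rule Bi)
    show "(\<lambda>n. norm (blinfun_apply (B n) e)) \<longlonglongrightarrow> 0"
    proof (rule LIMSEQ_I)
      fix \<epsilon> :: real assume \<epsilon>: "\<epsilon> > 0"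
      have "e \<in> closure (range jDE)" using dense by simp
      then obtain y where y: "y \<in> range jDE" "dist y e < \<epsilon> / (2 * (K + 1))"
        using \<epsilon> K0 unfolding closure_approachable by (metis divide_pos_pos mult_pos_pos zero_less_numeral add_nonneg_pos zero_less_one)
      then obtain d where d: "y = jDE d" by blast
      have "\<epsilon> / (2 * Kj) > 0" using \<epsilon> Kj by simp
      then obtain N where N: "\<And>n. n \<ge> N \<Longrightarrow> norm (norm (A n d) - 0) < \<epsilon> / (2 * Kj)"
        using LIMSEQ_D[OF A_lim[of d]] by blast
      have "norm (norm (blinfun_apply (B n) e) - 0) < \<epsilon>" if n: "n \<ge> N" for n
      proof -
        have "blinfun_apply (B n) e = blinfun_apply (B n) (e - jDE d) + jDE (A n d)"
          by (simp add: blinfun.bilinear_simps BjDE[symmetric])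
        then have "norm (blinfun_apply (B n) e) \<le> norm (blinfun_apply (B n) (e - jDE d)) + norm (jDE (A n d))"
          by (metis norm_triangle_ineq)
        also have "norm (blinfun_apply (B n) (e - jDE d)) \<le> K * (\<epsilon> / (2 * (K + 1)))"
        proof -
          have "norm (blinfun_apply (B n) (e - jDE d)) \<le> norm (B n) * norm (e - jDE d)" by (rule norm_blinfun)
          also have "\<dots> \<le> K * (\<epsilon> / (2 * (K + 1)))"
            using BK[of n] y d K0 by (intro mult_mono) (auto simp: dist_norm norm_minus_commute)
          finally show ?thesis .
        qed
        also have "norm (jDE (A n d)) \<le> norm (A n d) * Kj" by (rule Kj(2))
        also have "norm (A n d) * Kj < \<epsilon> / (2 * Kj) * Kj" using N[OF n] Kj by (intro mult_strict_right_mono) auto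
        also have "\<epsilon> / (2 * Kj) * Kj = \<epsilon> / 2" using Kj by simp
        also have "K * (\<epsilon> / (2 * (K + 1))) \<le> \<epsilon> / 2"
          using K0 \<epsilon> by (simp add: field_simps)
        finally show ?thesis by simp
      qed
      then show "\<exists>N. \<forall>n\<ge>N. norm (norm (blinfun_apply (B n) e) - 0) < \<epsilon>" by blast
    qed
  qed
qed

end
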